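(* Let $a\ge 1$ be an integer and let $S\subseteq\mathbb{F}_2^a$ and $T_a^{(i)}$ be as defined in the context. Then $T_a^{(i)}\cap T_a^{(j)}=\emptyset$ for all $i,j\in S$ with $i\neq j$.
   Context: Elements of $Z_{2^a}=\{0,\dots,2^a-1\}$ are identified with their binary expansions in $\mathbb{F}_2^a$; $\oplus$ is bitwise XOR; for $K\subset Z_{2^a}$, $i\oplus K=\{i\oplus k:k\in K\}$. Let $b=\lfloor\log_2 a\rfloor+1$ (so $2^{b-1}\le a<2^b$) and $m=2^b-a-1$. $T_a$: let $P_a=\{0,2^0,2^1,\dots,2^{a-1}\}$; let $Q_a=\emptyset$ if $a+1$ is a power of 2, and otherwise $Q_a=\{1\oplus 2^{a-m},\dots,1\oplus 2^{a-1}\}$; $T_a=P_a\cup Q_a$, $T_a^{(i)}=i\oplus T_a$. $S$: Let $M_a=\{0<x\le a: x \text{ not a power of } 2\}$, each $x\in M_a$ written $x=\sum_{j=0}^{b-1}x_j2^j$, $x_j\in\{0,1\}$. Define $g(x)=2x$ if $x_{b-1}=0$ and $g(x)=2x+1-2^b$ if $x_{b-1}=1$; let $\tilde M_a=g(M_a)$ and $H_a=\tilde M_a\setminus M_a$. Define $f':\tilde M_a\to M_a$ by $f'(x)=x$ if $x\in M_a\cap\tilde M_a$ and $f'(x)=x+1-2\lceil m/2\rceil$ if $x\in H_a$, and $f=f'\circ g$. Define $h(x)=2^{f(x)-1}+\sum_{j=0}^{b-2}x_j2^{2^{j+1}-1}+x_{b-1}$ for $x\in M_a$, let $M_a'=\{h(x):x\in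 M_a\}\subseteq Z_{2^a}\cong\mathbb{F}_2^a$, and let $S$ be the $\mathbb{F}_2$-linear span of $M_a'$ in $\mathbb{F}_2^a$. *)

theory Defs
  imports Complex_Main
begin

(* Elements of Z_{2^a} are naturals < 2^a; bitwise XOR is the library's xor on nat. *)

definition bB :: "nat \<Rightarrow> nat" where
  "bB a = nat \<lfloor>log 2 (real a)\<rfloor> + 1"

definition mM :: "nat \<Rightarrow> nat" where
  "mM a = 2 ^ bB a - a - 1"

definition P_set :: "nat \<Rightarrow> nat set" where
  "P_set a = {0} \<union> {2 ^ k | k. k < a}"

definition Q_set :: "nat \<Rightarrow> nat set" where
  "Q_set a = (if (\<exists>k. a + 1 = 2 ^ k) then {}
              else {xor 1 (2 ^ k) | k. a - mM a \<le> k \<and> k \<le> a - 1})"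

definition T_set :: "nat \<Rightarrow> nat set" where
  "T_set a = P_set a \<union> Q_set a"

definition T_shift :: "nat \<Rightarrow> nat \<Rightarrow> nat set" where
  "T_shift a i = (\<lambda>t. xor i t) ` T_set a"

definition M_set :: "nat \<Rightarrow> nat set" where
  "M_set a = {x. 0 < x \<and> x \<le> a \<and> \<not> (\<exists>k. x = 2 ^ k)}"

definition g_map :: "nat \<Rightarrow> nat \<Rightarrow> nat" where
  "g_map a x = (if bit x (bB a - 1) then 2 * x + 1 - 2 ^ bB a else 2 * x)"

definition Mt_set :: "nat \<Rightarrow> nat set" where
  "Mt_set a = g_map a ` M_set a"

definition H_set :: "nat \<Rightarrow> nat set" where
  "H_set a = Mt_set a - M_set a"

(* ceil(m/2) = (m+1) div 2 *)
definition f'_map :: "nat \<Rightarrow> nat \<Rightarrow> nat" where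
  "f'_map a y = (if y \<in> M_set a then y else y + 1 - 2 * ((mM a + 1) div 2))"

definition f_map :: "nat \<Rightarrow> nat \<Rightarrow> nat" where
  "f_map a x = f'_map a (g_map a x)"

definition h_map :: "nat \<Rightarrow> nat \<Rightarrow> nat" where
  "h_map a x = 2 ^ (f_map a x - 1)
     + (\<Sum>j<bB a - 1. (if bit x j then 2 ^ (2 ^ (j + 1) - 1) else 0))
     + (if bit x (bB a - 1) then 1 else 0)"

definition M'_set :: "nat \<Rightarrow> nat set" where
  "M'_set a = h_map a ` M_set a"

(* F_2-linear span of a set of bit vectors: closure under XOR containing 0 *)
inductive_set xor_span :: "nat set \<Rightarrow> nat set" for A :: "nat set" where
  zero: "0 \<in> xor_span A"
| step: "x \<in> A \<Longrightarrow> s \<in> xor_span A \<Longrightarrow> xor x s \<in> xor_span A"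

definition S_set :: "nat \<Rightarrow> nat set" where
  "S_set a = xor_span (M'_set a)"

end

theory Submission
  imports Defs
begin

fun Phi :: "(nat \<Rightarrow> nat) \<Rightarrow> nat \<Rightarrow> nat \<Rightarrow> nat" where
  "Phi c 0 s = 0"
| "Phi c (Suc k) s = xor (if bit s k then c k else 0) (Phi c k s)"

lemma Phi_xor: "Phi c k (xor s t) = xor (Phi c k s) (Phi c k t)"
  by (induction k) (auto simp: bit_xor_iff xor.assoc xor.commute xor.left_commute)

lemma Phi_pow: "Phi c k (2^q) = (if q < k then c q else 0)"
  by (induction k) (auto simp: bit_exp_iff less_Suc_eq)

lemma Phi_zero: "Phi c k 0 = 0"
  by (induction k) auto

lemma bit_ge: "bit (s::nat) i \<Longrightarrow> 2^i \<le> s"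
proof (rule ccontr)
  assume "bit s i" "\<not> 2^i \<le> s"
  then have "s div 2^i = 0" by simp
  with \<open>bit s i\<close> show False by (simp add: bit_iff_odd)
qed

lemma bit_lt: "(s::nat) < 2^n \<Longrightarrow> bit s i \<Longrightarrow> i < n"
  using bit_ge[of s i] by (metis leI order.strict_trans1 power_increasing_iff one_less_numeral_iff semiring_norm(76) not_less)

lemma xor_pow_small: "(y::nat) < 2^n \<Longrightarrow> xor (2^n) y = 2^n + y"
proof -
  assume y: "y < 2^n"
  have "and (2^n) y = 0"
    by (rule bit_eqI) (auto simp: bit_and_iff bit_exp_iff dest: bit_lt[OF y])
  then show ?thesis by (simp add: disjunctive_add_eq_xor)
qed

lemma bit_top: "(x::nat) < 2^(Suc n) \<Longrightarrow> bit x n \<longleftrightarrow> 2^n \<le> x"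
proof -
  assume "x < 2^(Suc n)"
  then have "x div 2^n < 2" by (simp add: less_mult_imp_div_less mult.commute)
  then show ?thesis
    by (auto simp: bit_iff_odd less_2_cases_iff div_eq_0_iff)
    (metis One_nat_def div_greater_zero_iff power_not_zero zero_less_one zero_neq_numeral)
qed

lemma odd_not_pow: "odd (y::nat) \<Longrightarrow> y > 1 \<Longrightarrow> \<not> (\<exists>k. y = 2^k)"
  by (metis dvd_power even_numeral gr0I one_less_numeral_iff power_0 semiring_norm(76) less_irrefl)

lemma double_not_pow: "\<not> (\<exists>k. (x::nat) = 2^k) \<Longrightarrow> \<not> (\<exists>k. 2*x = 2^k)"
  by (metis Suc_pred mult_left_cancel not_gr0 power_0 power_Suc zero_neq_numeral
      even_mult_iff odd_one dvd_refl)

lemma pm1_inj[simp]: "2 * (2::nat)^j - Suc 0 = 2 * 2^k - Suc 0 \<longleftrightarrow> j = k"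
proof -
  have "0 < (2::nat)^j" "0 < (2::nat)^k" by simp_all
  then have "2 * (2::nat)^j - Suc 0 = 2 * 2^k - Suc 0 \<longleftrightarrow> (2::nat)^j = 2^k" by linarith
  then show ?thesis by simp
qed

definition Wsum :: "nat \<Rightarrow> nat \<Rightarrow> nat" where
  "Wsum x n = (\<Sum>j<n. (if bit x j then 2 ^ (2 ^ (j + 1) - 1) else 0))"

lemma W_Suc_bits:
  "(bit (Wsum x n) i \<longleftrightarrow> (\<exists>j<n. i = 2^(j+1)-1 \<and> bit x j))
   \<and> Wsum x (Suc n) = xor (Wsum x n) (if bit x n then 2 ^ (2 ^ (n + 1) - 1) else 0)"
proof (induction n arbitrary: i)
  case 0
  then show ?case by (simp add: Wsum_def)
next
  case (Suc n)
  have IH: "\<And>i. bit (Wsum x n) i \<longleftrightarrow> (\<exists>j<n. i = 2^(j+1)-1 \<and> bit x j)" using Suc by blast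
  have dis: "and (Wsum x n') (if bit x n' then 2 ^ (2 ^ (n' + 1) - 1) else 0) = 0"
    if H: "\<And>i. bit (Wsum x n') i \<longleftrightarrow> (\<exists>j<n'. i = 2^(j+1)-1 \<and> bit x j)" for n'
  proof (rule bit_eqI)
    fix i
    show "bit (and (Wsum x n') (if bit x n' then 2 ^ (2 ^ (n' + 1) - 1) else 0)) i = bit 0 i"
    proof (cases "bit x n'")
      case True
      { assume "bit (Wsum x n') i" "i = 2 ^ (n' + 1) - 1"
        then obtain j where "j < n'" "i = 2^(j+1)-1" using H by blast
        then have "2^(j+1) < (2::nat)^(n'+1)" by (intro power_strict_increasing) auto
        with \<open>i = 2^(j+1)-1\<close> \<open>i = 2 ^ (n' + 1) - 1\<close> have False
          using one_le_power[of "2::nat" "j+1"] by linarith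
      }
      then show ?thesis using True by (auto simp: bit_and_iff bit_exp_iff)
    qed (simp)
  qed
  have step: "Wsum x (Suc n') = xor (Wsum x n') (if bit x n' then 2 ^ (2 ^ (n' + 1) - 1) else 0)"
    if "\<And>i. bit (Wsum x n') i \<longleftrightarrow> (\<exists>j<n'. i = 2^(j+1)-1 \<and> bit x j)" for n'
  proof -
    have "Wsum x (Suc n') = Wsum x n' + (if bit x n' then 2 ^ (2 ^ (n' + 1) - 1) else 0)"
      by (simp add: Wsum_def)
    also have "\<dots> = xor (Wsum x n') (if bit x n' then 2 ^ (2 ^ (n' + 1) - 1) else 0)"
      by (rule disjunctive_add_eq_xor[OF dis[OF that]])
    finally show ?thesis .
  qed
  have s1: "Wsum x (Suc n) = xor (Wsum x n) (if bit x n then 2 ^ (2 ^ (n + 1) - 1) else 0)"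
    using step[OF IH] .
  have b1: "bit (Wsum x (Suc n)) i \<longleftrightarrow> (\<exists>j<Suc n. i = 2^(j+1)-1 \<and> bit x j)" for i
    unfolding s1 by (auto simp: bit_xor_iff bit_exp_iff IH less_Suc_eq)
  show ?case using b1 step[OF b1] by blast
qed

lemma bit_W: "bit (Wsum x n) i \<longleftrightarrow> (\<exists>j<n. i = 2^(j+1)-1 \<and> bit x j)"
  using W_Suc_bits by blast

lemma W_Suc: "Wsum x (Suc n) = xor (Wsum x n) (if bit x n then 2 ^ (2 ^ (n + 1) - 1) else 0)"
  using W_Suc_bits by blast

lemma take_bit_Suc_xor: "take_bit (Suc n) (x::nat) = xor (take_bit n x) (if bit x n then 2^n else 0)"
  by (rule bit_eqI) (auto simp: bit_take_bit_iff bit_xor_iff bit_exp_iff less_Suc_eq)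

lemma Phi_W:
  assumes "\<forall>j<n. c (2^(j+1)-1) = 2^j" "2^n \<le> a"
  shows "Phi c a (Wsum x n) = take_bit n x"
  using assms
proof (induction n)
  case 0
  then show ?case by (simp add: Wsum_def Phi_zero)
next
  case (Suc n)
  have "2^n \<le> a" using Suc.prems(2) by (metis power_increasing_iff le_trans le_SucI order_refl one_less_numeral_iff semiring_norm(76) power_increasing)
  then have IH: "Phi c a (Wsum x n) = take_bit n x" using Suc by auto
  have "0 < (2::nat)^(n+1)" by simp
  moreover have "(2::nat)^(n+1) \<le> a" using Suc.prems(2) by simp
  ultimately have lt: "2 ^ (n + 1) - 1 < a" by linarith
  have cv: "c (2 ^ (n + 1) - 1) = 2^n" using Suc.prems(1) by auto
  show ?case
    by (simp add: W_Suc Phi_xor IH Phi_pow Phi_zero lt[simplified] cv[simplified] take_bit_Suc_xor del: take_bit_Suc)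
qed

definition cc :: "nat \<Rightarrow> nat \<Rightarrow> nat \<Rightarrow> nat" where
  "cc a A p = (if p = 0 then A else if odd p then (p+1) div 2
     else if p \<le> 2*(a - A) then A + p div 2 else p div 2 + ((2*A - a - 1) + 1) div 2)"

lemma cc_cases:
  assumes "a < 2*A" shows "cc a A p = (if p = 0 then A else if odd p then (p+1) div 2
     else if p \<le> 2*(a - A) then A + p div 2 else p div 2 + (2*A - a) div 2)"
  using assms unfolding cc_def by (simp add: Suc_diff_Suc)

lemma cc_range:
  assumes "A \<le> a" "a < 2*A" "p < a"
  shows "1 \<le> cc a A p \<and> cc a A p \<le> a"
proof -
  define h where "h = (2*A - a) div 2"
  have h: "2*h \<le> 2*A - a" "2*A - a \<le> 2*h+1" unfolding h_def by auto
  obtain k where "p = 2*k \<or> p = 2*k+1" by (metis evenE oddE)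
  then show ?thesis using assms h unfolding cc_cases[OF assms(2)] h_def[symmetric] by auto
qed

lemma cc_top:
  assumes "A \<le> a" "a < 2*A" "p < a" "2*(a-A)+1 \<le> p"
  shows "a - A < cc a A p \<and> cc a A p < A"
proof -
  define h where "h = (2*A - a) div 2"
  have h: "2*h \<le> 2*A - a" "2*A - a \<le> 2*h+1" unfolding h_def by auto
  obtain k where "p = 2*k \<or> p = 2*k+1" by (metis evenE oddE)
  then show ?thesis using assms h unfolding cc_cases[OF assms(2)] h_def[symmetric] by auto
qed

lemma cc_inj:
  assumes "A \<le> a" "a < 2*A" "p < a" "q < a" "cc a A p = cc a A q"
  shows "p = q"
proof -
  define h where "h = (2*A - a) div 2"
  have h: "2*h \<le> 2*A - a" "2*A - a \<le> 2*h+1" unfolding h_def by auto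
  obtain k where "p = 2*k \<or> p = 2*k+1" by (metis evenE oddE)
  moreover obtain l where "q = 2*l \<or> q = 2*l+1" by (metis evenE oddE)
  ultimately show ?thesis using assms h unfolding cc_cases[OF assms(2)] h_def[symmetric]
    by (auto split: if_splits)
qed

lemma bB_facts:
  assumes "a \<ge> 1"
  obtains n where "bB a = Suc n" "2^n \<le> a" "a < 2*2^n"
proof -
  obtain n where n: "2^n \<le> a" "a < 2^(n+1)" using ex_power_ivl1[of 2 a] assms by auto
  then have "\<lfloor>log (real 2) (real a)\<rfloor> = int n" by (intro floor_log_nat_eq_if) auto
  then have "bB a = Suc n" unfolding bB_def by simp
  then show ?thesis using that n by simp
qed

lemma f_lemma:
  assumes bb: "bB a = Suc n" and A: "2^n \<le> a" "a < 2*2^n" and xM: "x \<in> M_set a"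
  shows "\<exists>p. f_map a x = Suc p \<and> 0 < p \<and> p < a \<and> \<not>(\<exists>k. Suc p = 2^k) \<and> cc a (2^n) p = x"
proof -
  define A where "A = (2::nat)^n"
  have A1: "A \<le> a" "a < 2*A" using A unfolding A_def by auto
  have x: "0 < x" "x \<le> a" "\<not>(\<exists>k. x = 2^k)" using xM unfolding M_set_def by auto
  have mM: "mM a = 2*A - a - 1" by (simp add: mM_def bb A_def)
  have bitx: "bit x n \<longleftrightarrow> A \<le> x" unfolding A_def
    by (rule bit_top) (use x A in simp)
  have g: "g_map a x = (if A \<le> x then 2*x + 1 - 2*A else 2*x)"
    unfolding g_map_def bb using bitx by (simp add: A_def)
  show ?thesis
  proof (cases "A \<le> x")
    case True
    then have "x \<noteq> A" using x(3) unfolding A_def by blast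
    with True have xA: "A < x" by simp
    define p where "p = 2*(x-A)"
    have gv: "g_map a x = Suc p" using g True xA unfolding p_def by simp
    have "Suc p \<in> M_set a" unfolding M_set_def
      using odd_not_pow[of "Suc p"] xA x A1 unfolding p_def by auto
    then have f: "f_map a x = Suc p" unfolding f_map_def f'_map_def gv by simp
    have "\<not>(\<exists>k. Suc p = 2^k)" using odd_not_pow[of "Suc p"] xA unfolding p_def by auto
    moreover have "cc a A p = x" unfolding cc_cases[OF A1(2)] p_def using xA x A1 by auto
    ultimately show ?thesis using f xA x A1 unfolding p_def A_def by (intro exI[of _ "2*(x-2^n)"]) auto
  next
    case False
    then have gv: "g_map a x = 2*x" using g by simp
    show ?thesis
    proof (cases "2*x \<le> a")
      case True
      have np: "\<not>(\<exists>k. 2*x = 2^k)" using double_not_pow x(3) by blast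
      then have "2*x \<in> M_set a" unfolding M_set_def using True x by auto
      then have f: "f_map a x = 2*x" unfolding f_map_def f'_map_def gv by simp
      have "cc a A (2*x - 1) = x" unfolding cc_cases[OF A1(2)] using x by auto
      moreover have "Suc (2*x-1) = 2*x" using x by simp
      ultimately show ?thesis using f np x True unfolding A_def
        by (intro exI[of _ "2*x-1"]) auto
    next
      case c2: False
      define h where "h = (2*A - a) div 2"
      have h: "2*h \<le> 2*A - a" "2*A - a \<le> 2*h+1" unfolding h_def by auto
      have "2*x \<notin> M_set a" unfolding M_set_def using c2 by auto
      then have f: "f_map a x = 2*x + 1 - 2*h" unfolding f_map_def f'_map_def gv mM h_def
        using A1 by (simp add: Suc_diff_Suc)
      define p where "p = 2*x - 2*h"
      have f2: "f_map a x = Suc p" unfolding f p_def using h A1 c2 by simp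
      have pp: "2*(a-A) + 1 \<le> p" "p < a" "even p" unfolding p_def using h A1 c2 False by auto
      have "\<not>(\<exists>k. Suc p = 2^k)" using odd_not_pow[of "Suc p"] pp by auto
      moreover have "cc a A p = x" unfolding cc_cases[OF A1(2)] h_def[symmetric]
        using pp h A1 c2 False unfolding p_def by auto
      ultimately show ?thesis using f2 pp unfolding A_def by (intro exI[of _ p]) auto
    qed
  qed
qed

lemma bit1n: "bit (Suc 0) i \<longleftrightarrow> i = 0"
  by (cases i) (auto simp: bit_Suc bit_0)

lemma pm1_nz[simp]: "2 * (2::nat)^j - Suc 0 \<noteq> 0"
proof -
  have "0 < (2::nat)^j" by simp
  then show ?thesis by linarith
qed

lemma pm1_nz2[simp]: "\<not> 2 * (2::nat)^j \<le> Suc 0"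
proof -
  have "0 < (2::nat)^j" by simp
  then show ?thesis by linarith
qed

lemma cc_pow:
  assumes "A \<le> a" "a < 2*A" shows "cc a A (2^(j+1)-1) = 2^j"
proof -
  have "0 < (2::nat)^(j+1)" by simp
  then have "2^(j+1) - 1 + 1 = (2::nat)^(j+1)" "odd ((2::nat)^(j+1) - 1)" by auto
  moreover have "(2::nat)^(j+1) - 1 \<noteq> 0" by simp
  ultimately show ?thesis unfolding cc_cases[OF assms(2)] by auto
qed

lemma h_kernel:
  assumes bb: "bB a = Suc n" and A: "2^n \<le> a" "a < 2*2^n" and xM: "x \<in> M_set a"
  shows "Phi (cc a (2^n)) a (h_map a x) = 0"
proof -
  define c where "c = cc a (2^n)"
  obtain p where p: "f_map a x = Suc p" "0 < p" "p < a" "\<not>(\<exists>k. Suc p = 2^k)" "c p = x"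
    using f_lemma[OF assms] unfolding c_def by blast
  have x: "0 < x" "x \<le> a" using xM unfolding M_set_def by auto
  define e :: nat where "e = (if bit x n then 1 else 0)"
  have hx: "h_map a x = 2^p + (Wsum x n + e)"
    unfolding h_map_def bb Wsum_def e_def using p(1) by simp
  have d1: "and (Wsum x n) e = 0"
    by (rule bit_eqI) (auto simp: e_def bit_and_iff bit_W bit1n)
  have We: "Wsum x n + e = xor (Wsum x n) e" by (rule disjunctive_add_eq_xor[OF d1])
  have d2: "and (2^p) (xor (Wsum x n) e) = 0"
  proof (rule bit_eqI)
    fix i
    { assume "i = p" "bit (Wsum x n) i"
      then obtain j where "p = 2^(j+1)-1" by (auto simp: bit_W)
      then have "Suc p = 2^(j+1)" using one_le_power[of "2::nat" "j+1"] by simp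
      with p(4) have False by blast }
    then show "bit (and (2^p) (xor (Wsum x n) e)) i = bit 0 i"
      using p(2) by (auto simp: bit_and_iff bit_xor_iff bit_exp_iff e_def bit1n)
  qed
  have hx2: "h_map a x = xor (2^p) (xor (Wsum x n) e)"
    using hx We disjunctive_add_eq_xor[OF d2] by simp
  have A1: "2^n \<le> a" "a < 2*2^n" using A by auto
  have cpow: "\<forall>j<n. c (2^(j+1)-1) = 2^j" unfolding c_def using cc_pow[OF A1] by blast
  have c0: "c 0 = 2^n" unfolding c_def cc_def by simp
  have Pe: "Phi c a e = (if bit x n then 2^n else 0)"
    using Phi_pow[of c a 0] x c0 by (simp add: e_def Phi_zero)
  have xlt: "x < 2^(Suc n)" using x A by simp
  have tb: "xor (take_bit n x) (if bit x n then 2^n else 0) = x"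
    using take_bit_Suc_xor[of n x] take_bit_nat_eq_self_iff[of "Suc n" x] xlt by simp
  have "Phi c a (h_map a x) = xor (c p) (xor (take_bit n x) (if bit x n then 2^n else 0))"
    unfolding hx2 Phi_xor Phi_pow Pe using p(3) Phi_W[OF cpow A(1)] by simp
  also have "\<dots> = 0" using tb p(5) by simp
  finally show ?thesis unfolding c_def .
qed

lemma S_kernel:
  assumes bb: "bB a = Suc n" and A: "2^n \<le> a" "a < 2*2^n" and s: "s \<in> S_set a"
  shows "Phi (cc a (2^n)) a s = 0"
  using s unfolding S_set_def
proof (induction rule: xor_span.induct)
  case zero
  then show ?case by (simp add: Phi_zero)
next
  case (step x s)
  then obtain y where "y \<in> M_set a" "x = h_map a y" unfolding M'_set_def by blast
  then show ?case using step h_kernel[OF bb A] by (simp add: Phi_xor)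
qed

lemma T_cases:
  assumes bb: "bB a = Suc n" and A: "2^n \<le> a" "a < 2*2^n" and t: "t \<in> T_set a"
  shows "t = 0 \<or> (\<exists>k<a. t = 2^k) \<or> (\<exists>k. 2*(a-2^n)+1 \<le> k \<and> k < a \<and> t = xor 1 (2^k))"
proof -
  have mM: "a - mM a = 2*(a-2^n)+1" using A by (simp add: mM_def bb)
  have "a \<ge> 1" using A by (metis le_trans one_le_numeral one_le_power)
  then show ?thesis using t mM unfolding T_set_def P_set_def Q_set_def
    by (auto split: if_splits)
qed

lemma Phi_T:
  assumes bb: "bB a = Suc n" and A: "2^n \<le> a" "a < 2*2^n"
  and t1: "t1 \<in> T_set a" and t2: "t2 \<in> T_set a"
  and eq: "Phi (cc a (2^n)) a t1 = Phi (cc a (2^n)) a t2"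
  shows "t1 = t2"
proof -
  define c where "c = cc a (2^n)"
  have A1: "2^n \<le> a" "a < 2*2^n" using A by auto
  have a0: "0 < a" using A by (metis le_trans not_less zero_less_power pos2 order.strict_trans2 le_refl)
  have c0: "c 0 = 2^n" unfolding c_def cc_def by simp
  define V where "V t = Phi c a t" for t
  have V: "V t = 0 \<and> t = 0 \<or> (\<exists>k<a. t = 2^k \<and> V t = c k \<and> 1 \<le> c k \<and> c k \<le> a)
          \<or> (\<exists>k<a. t = xor 1 (2^k) \<and> V t = 2^n + c k \<and> c k > a - 2^n)"
    if "t \<in> T_set a" for t
  proof -
    from T_cases[OF bb A that] consider "t = 0" | k where "k<a" "t = 2^k"
      | k where "2*(a-2^n)+1 \<le> k" "k < a" "t = xor 1 (2^k)" by blast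
    then show ?thesis
    proof cases
      case 1 then show ?thesis by (simp add: V_def Phi_zero)
    next
      case (2 k)
      then show ?thesis using cc_range[OF A1, of k] unfolding V_def c_def
        by (auto simp: Phi_pow)
    next
      case (3 k)
      have top: "a - 2^n < c k" "c k < 2^n" using cc_top[OF A1 3(2) 3(1)] unfolding c_def by auto
      have "V t = xor (c 0) (c k)" unfolding V_def 3(3) Phi_xor
        using Phi_pow[of c a 0] Phi_pow[of c a k] 3 a0 by simp
      also have "\<dots> = 2^n + c k" using c0 xor_pow_small[OF top(2)] by simp
      finally show ?thesis using 3 top by blast
    qed
  qed
  have inj: "p = q" if "p < a" "q < a" "c p = c q" for p q
    using cc_inj[OF A1 that[unfolded c_def]] .
  have eqV: "V t1 = V t2" using eq unfolding V_def c_def .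
  show ?thesis
  proof -
    from V[OF t1] consider (z1) "V t1 = 0" "t1 = 0"
      | (p1) k where "k<a" "t1 = 2^k" "V t1 = c k" "1 \<le> c k" "c k \<le> a"
      | (q1) k where "k<a" "t1 = xor 1 (2^k)" "V t1 = 2^n + c k" "a - 2^n < c k"
      by (elim disjE exE conjE) blast+
    then show ?thesis
    proof cases
      case z1
      from V[OF t2] show ?thesis
      proof (elim disjE exE conjE)
        fix l assume "V t2 = c l" "1 \<le> c l" then show ?thesis using z1 eqV by simp
      next
        fix l assume "V t2 = 2^n + c l" then show ?thesis using z1 eqV by simp
      qed (use z1 in simp)
    next
      case (p1 k)
      from V[OF t2] show ?thesis
      proof (elim disjE exE conjE)
        assume "V t2 = 0" then show ?thesis using p1 eqV by simp
      next
        fix l assume "l < a" "t2 = 2^l" "V t2 = c l"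
        then have "c k = c l" using p1 eqV by simp
        then have "k = l" using inj p1(1) \<open>l < a\<close> by blast
        then show ?thesis using p1 \<open>t2 = 2^l\<close> by simp
      next
        fix l assume "V t2 = 2^n + c l" "a - 2^n < c l"
        then show ?thesis using p1 eqV by linarith
      qed
    next
      case (q1 k)
      from V[OF t2] show ?thesis
      proof (elim disjE exE conjE)
        assume "V t2 = 0" then show ?thesis using q1 eqV by simp
      next
        fix l assume "V t2 = c l" "c l \<le> a"
        have "a - 2^n < c k" using q1 by simp
        then show ?thesis using q1 eqV \<open>V t2 = c l\<close> \<open>c l \<le> a\<close> by linarith
      next
        fix l assume "l < a" "t2 = xor 1 (2^l)" "V t2 = 2^n + c l"
        then have "c k = c l" using q1 eqV by simp
        then have "k = l" using inj q1(1) \<open>l < a\<close> by blast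
        then show ?thesis using q1 \<open>t2 = xor 1 (2^l)\<close> by simp
      qed
    qed
  qed
qed

theorem mainTheorem3:
  fixes a i j :: nat
  assumes "a \<ge> 1" and "i \<in> S_set a" and "j \<in> S_set a" and "i \<noteq> j"
  shows "T_shift a i \<inter> T_shift a j = {}"
proof (rule ccontr)
  obtain n where bb: "bB a = Suc n" and A: "2^n \<le> a" "a < 2*2^n" using bB_facts[OF assms(1)] by blast
  define c where "c = cc a (2^n)"
  assume "T_shift a i \<inter> T_shift a j \<noteq> {}"
  then obtain t1 t2 where t: "t1 \<in> T_set a" "t2 \<in> T_set a" "xor i t1 = xor j t2"
    unfolding T_shift_def by blast
  have Pi: "Phi c a i = 0" and Pj: "Phi c a j = 0"
    using S_kernel[OF bb A] assms(2,3) unfolding c_def by auto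
  have "Phi c a (xor i t1) = Phi c a (xor j t2)" using t(3) by simp
  then have "Phi c a t1 = Phi c a t2" using Pi Pj by (simp add: Phi_xor)
  then have "t1 = t2" using Phi_T[OF bb A t(1,2)] unfolding c_def by blast
  then have "xor (xor i t1) t1 = xor (xor j t1) t1" using t(3) by simp
  then have "i = j" by (simp add: xor.assoc)
  with assms(4) show False by simp
qed

end
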